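(* Let $z_1,z_2,z_3$ be the (physical, real) coupling variables $z_i=\tanh K_i$ of the anisotropic triangular Ising model, and set $v_i=e^{-2K_i}=\frac{1-z_i}{1+z_i}$ for $i=1,2,3$. Define $$a=2z_3(1+z_1^2)(1+z_2^2)+4z_1z_2(1+z_3^2),\qquad c=(1-z_1^2)(1-z_2^2),\qquad b=z_3^2c,$$ and the Toeplitz matrix elements (Fourier coefficients) $$w_n=\int_{-\pi}^{\pi}\frac{d\theta}{2\pi}\,\frac{a\cos(n\theta)-b\cos((n-1)\theta)-c\cos((n+1)\theta)}{\sqrt{a^2+b^2+c^2-2a(b+c)\cos\theta+2bc\cos(2\theta)}},\qquad n\in\mathbb Z,$$ i.e. the Fourier coefficients of $w(\zeta)=\left(\frac{a-b\zeta-c\zeta^{-1}}{a-b\zeta^{-1}-c\zeta}\right)^{1/2}$ on $|\zeta|=1$. Let $\Gamma=1+v_1^2v_2^2-(v_1^2+v_2^2)v_3^2$. Then for every $n\in\mathbb Z$, \begin{multline*} (n-3)v_1^2v_2^2(1-v_3^2)^2w_{n-3}-2v_1v_2\Gamma\left[v_3+(n-2)(1+v_3^2)\right]w_{n-2}\\ +\Big[(n-1)(v_1^4+4v_1^2v_2^2+v_2^4)v_3^4-2(n-1)\left(v_1^2+v_2^2-6v_1^2v_2^2+v_1^4v_2^2+v_1^2v_2^4\right)v_3^2\\ +(n-1)(1+4v_1^2v_2^2+v_1^4v_2^4)+8v_1^2v_2^2v_3(1+v_3^2)\Big]w_{n-1}\\ -2v_1v_2\Gamma\left[v_3+n(1+v_3^2)\right]w_n+(n+1)v_1^2v_2^2(1-v_3^2)^2w_{n+1}=0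 . \end{multline*} In particular, for $n=-1$ and $n=3$ this relation involves only four consecutive terms (it is of third order).
   Context: The anisotropic triangular Ising model has nearest-neighbour couplings $K_1$ (horizontal), $K_2$ (vertical) and $K_3$ (up-right diagonal) on a square grid; $z_i=\tanh K_i\in[-1,1]$ and $v_i=e^{-2K_i}\in[0,\infty)$. The couplings are assumed such that the square root in the integrand is nonvanishing on $\theta\in[-\pi,\pi]$ (positive branch), so that the $w_n$ are well defined. *)

theory Defs
  imports "HOL-Analysis.Analysis"
begin

definition tri_v :: "real \<Rightarrow> real" where
  "tri_v z = (1 - z) / (1 + z)"

definition tri_a :: "real \<Rightarrow> real \<Rightarrow> real \<Rightarrow> real" where
  "tri_a z1 z2 z3 = 2 * z3 * (1 + z1^2) * (1 + z2^2) + 4 * z1 * z2 * (1 + z3^2)"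

definition tri_c :: "real \<Rightarrow> real \<Rightarrow> real \<Rightarrow> real" where
  "tri_c z1 z2 z3 = (1 - z1^2) * (1 - z2^2)"

definition tri_b :: "real \<Rightarrow> real \<Rightarrow> real \<Rightarrow> real" where
  "tri_b z1 z2 z3 = z3^2 * tri_c z1 z2 z3"

definition tri_rad :: "real \<Rightarrow> real \<Rightarrow> real \<Rightarrow> real \<Rightarrow> real" where
  "tri_rad z1 z2 z3 \<theta> =
     (let a = tri_a z1 z2 z3; b = tri_b z1 z2 z3; c = tri_c z1 z2 z3 in
      a^2 + b^2 + c^2 - 2 * a * (b + c) * cos \<theta> + 2 * b * c * cos (2 * \<theta>))"

definition tri_w :: "real \<Rightarrow> real \<Rightarrow> real \<Rightarrow> int \<Rightarrow> real" where
  "tri_w z1 z2 z3 n =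
     (let a = tri_a z1 z2 z3; b = tri_b z1 z2 z3; c = tri_c z1 z2 z3 in
      integral {-pi..pi} (\<lambda>\<theta>.
        (a * cos (of_int n * \<theta>) - b * cos (of_int (n - 1) * \<theta>)
           - c * cos (of_int (n + 1) * \<theta>)) / sqrt (tri_rad z1 z2 z3 \<theta>)) / (2 * pi))"

end

theory Submission imports Defs begin
lemma trig_id:
  fixes a b c M x t :: real
  shows "(-a*M*cos x + b*(M-1)*cos(x-t) + c*(M+1)*cos(x+t)) * (a^2+b^2+c^2 - 2*a*(b+c)*cos t + 2*b*c*cos(2*t))
     + (-a* sin x + b* sin(x-t) + c* sin(x+t)) * (2*a*(b+c)* sin t - 4*b*c* sin(2*t))/2
   = b*c*(2-M)*(a*cos(x-2*t) - b*cos(x-3*t) - c*cos(x-t))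
     + a*((M-3/2)*b+(M-1/2)*c)*(a*cos(x-t) - b*cos(x-2*t) - c*cos x)
     + (b^2-c^2-M*(a^2+b^2+c^2))*(a*cos x - b*cos(x-t) - c*cos(x+t))
     + a*((M+1/2)*b+(M+3/2)*c)*(a*cos(x+t) - b*cos x - c*cos(x+2*t))
     - b*c*(M+2)*(a*cos(x+2*t) - b*cos(x+t) - c*cos(x+3*t))"
proof -
  have c2: "cos(2*t) = 2*cos t^2 - 1" by (simp add: cos_double_cos)
  have s2: "sin(2*t) = 2* sin t*cos t" by (simp add: sin_double)
  have c3: "cos(3*t) = 4*cos t^3 - 3*cos t" by (simp add: cos_treble_cos)
  have p: "sin t^2 = 1 - cos t^2" by (simp add: sin_squared_eq)
  have s3: "sin(3*t) = 3* sin t - 4* sin t^3"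
  proof -
    have "sin(3*t) = sin(2*t+t)" by simp
    also have "... = sin(2*t)*cos t + cos(2*t)* sin t" by (rule sin_add)
    also have "... = sin t*(4*cos t^2 - 1)" unfolding c2 s2 by (simp add: algebra_simps power2_eq_square)
    also have "... = 3* sin t - 4* sin t^3" by (simp only: cos_squared_eq) (simp add: algebra_simps power2_eq_square power3_eq_cube)
    finally show ?thesis .
  qed
  have e: "\<And>k. cos(x-k) = cos x*cos k + sin x* sin k" "\<And>k. cos(x+k) = cos x*cos k - sin x* sin k"
     "\<And>k. sin(x-k) = sin x*cos k - cos x* sin k" "\<And>k. sin(x+k) = sin x*cos k + cos x* sin k"
    by (simp_all add: cos_diff cos_add sin_diff sin_add)
  show ?thesis unfolding e c2 s2 c3 s3
    using p by algebra
qed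
lemma rec_general:
  fixes a b c :: real and m :: int and R :: "real \<Rightarrow> real" and F :: "int \<Rightarrow> real \<Rightarrow> real"
  assumes Rdef: "\<And>t. R t = a^2+b^2+c^2 - 2*a*(b+c)*cos t + 2*b*c*cos(2*t)"
    and Rpos: "\<And>t. t \<in> {-pi..pi} \<Longrightarrow> R t > 0"
    and Fdef: "\<And>k t. F k t = (a*cos(of_int k*t) - b*cos(of_int(k-1)*t) - c*cos(of_int(k+1)*t)) / sqrt (R t)"
  shows "b*c*(2-of_int m)*integral {-pi..pi} (F (m-2))
     + a*((of_int m-3/2)*b+(of_int m-1/2)*c)*integral {-pi..pi} (F (m-1))
     + (b^2-c^2-of_int m*(a^2+b^2+c^2))*integral {-pi..pi} (F m)
     + a*((of_int m+1/2)*b+(of_int m+3/2)*c)*integral {-pi..pi} (F (m+1))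
     - b*c*(of_int m+2)*integral {-pi..pi} (F (m+2)) = 0"
proof -
  define M where "M = (of_int m :: real)"
  define g where "g t = (-a * sin (M*t) + b * sin(M*t-t) + c * sin(M*t+t)) * sqrt (R t)" for t
  define G where "G t = b*c*(2-M)*F (m-2) t + a*((M-3/2)*b+(M-1/2)*c)*F (m-1) t
     + (b^2-c^2-M*(a^2+b^2+c^2))*F m t + a*((M+1/2)*b+(M+3/2)*c)*F (m+1) t
     - b*c*(M+2)*F (m+2) t" for t
  have contR: "continuous_on S R" for S
    unfolding Rdef[abs_def] by (intro continuous_intros)
  have Rne: "\<forall>t\<in>{-pi..pi}. sqrt (R t) \<noteq> 0" using Rpos by (simp add: less_imp_neq[symmetric])
  have cont: "continuous_on {-pi..pi} (F k)" for k
  proof -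
    have "continuous_on {-pi..pi} (\<lambda>t. (a*cos(of_int k*t) - b*cos(of_int(k-1)*t) - c*cos(of_int(k+1)*t)) / sqrt (R t))"
      using Rne contR by (intro continuous_intros) auto
    then show ?thesis by (simp add: Fdef[abs_def])
  qed
  have int: "(F k has_integral integral {-pi..pi} (F k)) {-pi..pi}" for k
    using cont integrable_continuous_interval by blast
  have deriv: "(g has_vector_derivative G t) (at t within {-pi..pi})" if t: "t \<in> {-pi..pi}" for t
  proof -
    have Rt: "R t > 0" using Rpos t by auto
    have dR: "(R has_real_derivative (2*a*(b+c)* sin t - 4*b*c* sin(2*t))) (at t)"
      unfolding Rdef[abs_def] by (auto intro!: derivative_eq_intros)
    define T' where "T' = -a*M*cos (M*t) + b*(M-1)*cos(M*t-t) + c*(M+1)*cos(M*t+t)"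
    define T where "T = -a * sin (M*t) + b * sin(M*t-t) + c * sin(M*t+t)"
    define R' where "R' = 2*a*(b+c) * sin t - 4*b*c * sin(2*t)"
    have dT: "((\<lambda>t. -a * sin (M*t) + b * sin(M*t-t) + c * sin(M*t+t)) has_real_derivative T') (at t)"
      unfolding T'_def by (auto intro!: derivative_eq_intros simp: algebra_simps)
    have dS: "((\<lambda>t. sqrt (R t)) has_real_derivative (inverse (sqrt (R t)) / 2 * R')) (at t)"
      unfolding R'_def by (rule DERIV_chain2[OF DERIV_real_sqrt[OF Rt] dR])
    have dg: "(g has_real_derivative (T' * sqrt (R t) + (inverse (sqrt (R t)) / 2 * R') * T)) (at t)"
      unfolding g_def T_def by (rule DERIV_mult[OF dT dS])
    have sq: "sqrt (R t) * sqrt (R t) = R t" using Rt by simp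
    have sp: "sqrt (R t) > 0" using Rt by simp
    have e1: "of_int (m-1) = M - 1" "of_int (m+1) = M + 1" "of_int m = M" by (simp_all add: M_def)
    have cs: "cos(of_int (m - 2) * t) = cos(M*t - 2*t)" "cos(of_int (m - 2 - 1) * t) = cos(M*t - 3*t)"
      "cos(of_int (m - 2 + 1) * t) = cos(M*t - t)" "cos(of_int (m - 1) * t) = cos(M*t - t)"
      "cos(of_int (m - 1 - 1) * t) = cos(M*t - 2*t)" "cos(of_int (m - 1 + 1) * t) = cos(M*t)"
      "cos(of_int (m + 1) * t) = cos(M*t + t)" "cos(of_int (m + 1 - 1) * t) = cos(M*t)"
      "cos(of_int (m + 1 + 1) * t) = cos(M*t + 2*t)" "cos(of_int (m + 2) * t) = cos(M*t + 2*t)"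
      "cos(of_int (m + 2 - 1) * t) = cos(M*t + t)" "cos(of_int (m + 2 + 1) * t) = cos(M*t + 3*t)"
      "cos(of_int m * t) = cos(M*t)"
      "sin(of_int (m - 1) * t) = sin(M*t - t)" "sin(of_int (m + 1) * t) = sin(M*t + t)" "sin(of_int m * t) = sin(M*t)"
      by (simp_all add: M_def algebra_simps)
    have Fs: "F k t * sqrt (R t) = a*cos(of_int k*t) - b*cos(of_int(k-1)*t) - c*cos(of_int(k+1)*t)" for k
      using sp by (simp add: Fdef)
    have "G t * sqrt (R t) = b*c*(2-M)*(F (m-2) t * sqrt (R t)) + a*((M-3/2)*b+(M-1/2)*c)*(F (m-1) t * sqrt (R t))
     + (b^2-c^2-M*(a^2+b^2+c^2))*(F m t * sqrt (R t)) + a*((M+1/2)*b+(M+3/2)*c)*(F (m+1) t * sqrt (R t))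
     - b*c*(M+2)*(F (m+2) t * sqrt (R t))"
      unfolding G_def by (simp only: algebra_simps)
    also have "\<dots> = T' * R t + T * R' / 2"
      unfolding Fs cs T'_def T_def R'_def by (subst Rdef) (rule trig_id[symmetric])
    finally have G1: "G t * sqrt (R t) = T' * R t + T * R' / 2" .
    have D1: "(T' * sqrt (R t) + (inverse (sqrt (R t)) / 2 * R') * T) * sqrt (R t) = T' * R t + T * R' / 2"
      using sp sq by (simp add: field_simps)
    have "G t = T' * sqrt (R t) + (inverse (sqrt (R t)) / 2 * R') * T"
      using G1 D1 sp by (metis mult_right_cancel less_irrefl)
    then have "(g has_real_derivative G t) (at t)" using dg by simp
    then show ?thesis
      by (simp add: has_real_derivative_iff_has_vector_derivative has_vector_derivative_at_within)
  qed
  have "(G has_integral (g pi - g (-pi))) {-pi..pi}"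
    by (rule fundamental_theorem_of_calculus) (use deriv in auto)
  moreover have "g pi = 0" "g (-pi) = 0"
  proof -
    have "sin (M*pi) = 0" "sin (M*pi-pi) = 0" "sin (M*pi+pi) = 0"
      "sin (M*(-pi)) = 0" "sin (M*(-pi)-(-pi)) = 0" "sin (M*(-pi)+(-pi)) = 0"
      using sin_npi_int[of m] by (simp_all add: M_def sin_diff sin_add mult.commute)
    then show "g pi = 0" "g (-pi) = 0" unfolding g_def by simp_all
  qed
  ultimately have h0: "(G has_integral 0) {-pi..pi}" by simp
  have h1: "(G has_integral (b*c*(2-M)*integral {-pi..pi} (F (m-2))
     + a*((M-3/2)*b+(M-1/2)*c)*integral {-pi..pi} (F (m-1))
     + (b^2-c^2-M*(a^2+b^2+c^2))*integral {-pi..pi} (F m)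
     + a*((M+1/2)*b+(M+3/2)*c)*integral {-pi..pi} (F (m+1))
     - b*c*(M+2)*integral {-pi..pi} (F (m+2)))) {-pi..pi}"
    unfolding G_def[abs_def]
    by (intro has_integral_add has_integral_diff has_integral_mult_right int)
  show ?thesis using has_integral_unique[OF h1 h0] by (simp add: M_def)
qed

lemma tri_v_mul: assumes "-1 < z" shows "tri_v z * (1 + z) = 1 - z"
  using assms by (simp add: tri_v_def)

theorem corollary2:
  fixes z1 z2 z3 :: real and n :: int
  assumes hz1: "-1 < z1" "z1 \<le> 1"
    and hz2: "-1 < z2" "z2 \<le> 1"
    and hz3: "-1 < z3" "z3 \<le> 1"
    and hrad: "\<forall>\<theta>\<in>{-pi..pi}. tri_rad z1 z2 z3 \<theta> \<noteq> 0"
  shows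
   "(let v1 = tri_v z1; v2 = tri_v z2; v3 = tri_v z3; w = tri_w z1 z2 z3;
         \<Gamma> = 1 + v1^2 * v2^2 - (v1^2 + v2^2) * v3^2 in
      of_int (n - 3) * v1^2 * v2^2 * (1 - v3^2)^2 * w (n - 3)
      - 2 * v1 * v2 * \<Gamma> * (v3 + of_int (n - 2) * (1 + v3^2)) * w (n - 2)
      + (of_int (n - 1) * (v1^4 + 4 * v1^2 * v2^2 + v2^4) * v3^4
         - 2 * of_int (n - 1) * (v1^2 + v2^2 - 6 * v1^2 * v2^2 + v1^4 * v2^2 + v1^2 * v2^4) * v3^2
         + of_int (n - 1) * (1 + 4 * v1^2 * v2^2 + v1^4 * v2^4)
         + 8 * v1^2 * v2^2 * v3 * (1 + v3^2)) * w (n - 1)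
      - 2 * v1 * v2 * \<Gamma> * (v3 + of_int n * (1 + v3^2)) * w n
      + of_int (n + 1) * v1^2 * v2^2 * (1 - v3^2)^2 * w (n + 1)) = 0"
proof -
  define a where "a = tri_a z1 z2 z3"
  define b where "b = tri_b z1 z2 z3"
  define c where "c = tri_c z1 z2 z3"
  define R where "R t = tri_rad z1 z2 z3 t" for t
  define F where "F k t = (a*cos(of_int k*t) - b*cos(of_int(k-1)*t) - c*cos(of_int(k+1)*t)) / sqrt (R t)" for k t
  define w where "w = tri_w z1 z2 z3"
  define v1 where "v1 = tri_v z1"
  define v2 where "v2 = tri_v z2"
  define v3 where "v3 = tri_v z3"
  have Rdef: "R t = a^2+b^2+c^2 - 2*a*(b+c)*cos t + 2*b*c*cos(2*t)" for t
    by (simp add: R_def tri_rad_def a_def b_def c_def Let_def)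
  have Rsq: "R t = (a - (b+c)*cos t)^2 + ((b-c) * sin t)^2" for t
    unfolding Rdef cos_double using sin_cos_squared_add[of t] by algebra
  have Rpos: "R t > 0" if "t \<in> {-pi..pi}" for t
  proof -
    have "R t \<ge> 0" unfolding Rsq by simp
    moreover have "R t \<noteq> 0" using hrad that by (simp add: R_def)
    ultimately show ?thesis by simp
  qed
  have wI: "integral {-pi..pi} (F k) = 2 * pi * w k" for k
    unfolding w_def tri_w_def F_def[abs_def] R_def a_def b_def c_def Let_def by simp
  have rel: "b*c*(2-of_int (n-1))*integral {-pi..pi} (F (n-1-2))
     + a*((of_int (n-1)-3/2)*b+(of_int (n-1)-1/2)*c)*integral {-pi..pi} (F (n-1-1))
     + (b^2-c^2-of_int (n-1)*(a^2+b^2+c^2))*integral {-pi..pi} (F (n-1))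
     + a*((of_int (n-1)+1/2)*b+(of_int (n-1)+3/2)*c)*integral {-pi..pi} (F (n-1+1))
     - b*c*(of_int (n-1)+2)*integral {-pi..pi} (F (n-1+2)) = 0"
    by (rule rec_general[OF Rdef Rpos F_def])
  have idx: "n-1-2 = n-3" "n-1-1 = n-2" "n-1+1 = n" "n-1+2 = n+1" by simp_all
  define E where "E = b*c*(2-of_int (n-1))*w (n-3)
     + a*((of_int (n-1)-3/2)*b+(of_int (n-1)-1/2)*c)*w (n-2)
     + (b^2-c^2-of_int (n-1)*(a^2+b^2+c^2))*w (n-1)
     + a*((of_int (n-1)+1/2)*b+(of_int (n-1)+3/2)*c)*w n
     - b*c*(of_int (n-1)+2)*w (n+1)"
  have "2 * pi * E = 0" using rel unfolding idx wI E_def by (simp add: algebra_simps)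
  then have E0: "E = 0" by simp
  have vq1: "v1 * (1+z1) = 1 - z1" using tri_v_mul[OF hz1(1)] by (simp add: v1_def)
  have vq2: "v2 * (1+z2) = 1 - z2" using tri_v_mul[OF hz2(1)] by (simp add: v2_def)
  have vq3: "v3 * (1+z3) = 1 - z3" using tri_v_mul[OF hz3(1)] by (simp add: v3_def)
  define D where "D = ((1+z1)*(1+z2)*(1+z3))^4"
  have D0: "D \<noteq> 0" using hz1 hz2 hz3 by (simp add: D_def)
  have abc: "a = 2 * z3 * (1 + z1^2) * (1 + z2^2) + 4 * z1 * z2 * (1 + z3^2)"
     "c = (1 - z1^2) * (1 - z2^2)" "b = z3^2 * ((1 - z1^2) * (1 - z2^2))"
    by (simp_all add: a_def b_def c_def tri_a_def tri_b_def tri_c_def)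
  define G where "G = 1 + v1^2 * v2^2 - (v1^2 + v2^2) * v3^2"
  have K1: "D * (v1^2 * v2^2 * (1 - v3^2)^2) = 16*b*c"
    unfolding abc D_def using vq1 vq2 vq3 by algebra
  have K2: "D * (2 * v1 * v2 * G * (1 + v3^2)) = 16*a*(b+c)"
    unfolding abc D_def G_def using vq1 vq2 vq3 by algebra
  have K3: "D * (2 * v1 * v2 * G * v3) = 8*a*(c-b)"
    unfolding abc D_def G_def using vq1 vq2 vq3 by algebra
  have K4: "D * ((v1^4 + 4 * v1^2 * v2^2 + v2^4) * v3^4
         - 2 * (v1^2 + v2^2 - 6 * v1^2 * v2^2 + v1^4 * v2^2 + v1^2 * v2^4) * v3^2
         + (1 + 4 * v1^2 * v2^2 + v1^4 * v2^4)) = 16*(a^2+b^2+c^2)"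
    unfolding abc D_def using vq1 vq2 vq3 by algebra
  have K5: "D * (8 * v1^2 * v2^2 * v3 * (1 + v3^2)) = -16*(b^2-c^2)"
    unfolding abc D_def using vq1 vq2 vq3 by algebra
  define S where "S = of_int (n - 3) * v1^2 * v2^2 * (1 - v3^2)^2 * w (n - 3)
      - 2 * v1 * v2 * G * (v3 + of_int (n - 2) * (1 + v3^2)) * w (n - 2)
      + (of_int (n - 1) * (v1^4 + 4 * v1^2 * v2^2 + v2^4) * v3^4
         - 2 * of_int (n - 1) * (v1^2 + v2^2 - 6 * v1^2 * v2^2 + v1^4 * v2^2 + v1^2 * v2^4) * v3^2
         + of_int (n - 1) * (1 + 4 * v1^2 * v2^2 + v1^4 * v2^4)
         + 8 * v1^2 * v2^2 * v3 * (1 + v3^2)) * w (n - 1)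
      - 2 * v1 * v2 * G * (v3 + of_int n * (1 + v3^2)) * w n
      + of_int (n + 1) * v1^2 * v2^2 * (1 - v3^2)^2 * w (n + 1)"
  have "D * S = of_int (n-3) * (D * (v1^2 * v2^2 * (1 - v3^2)^2)) * w (n-3)
      - (D * (2 * v1 * v2 * G * v3) + of_int (n-2) * (D * (2 * v1 * v2 * G * (1 + v3^2)))) * w (n-2)
      + (of_int (n-1) * (D * ((v1^4 + 4 * v1^2 * v2^2 + v2^4) * v3^4
         - 2 * (v1^2 + v2^2 - 6 * v1^2 * v2^2 + v1^4 * v2^2 + v1^2 * v2^4) * v3^2
         + (1 + 4 * v1^2 * v2^2 + v1^4 * v2^4))) + D * (8 * v1^2 * v2^2 * v3 * (1 + v3^2))) * w (n-1)
      - (D * (2 * v1 * v2 * G * v3) + of_int n * (D * (2 * v1 * v2 * G * (1 + v3^2)))) * w n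
      + of_int (n+1) * (D * (v1^2 * v2^2 * (1 - v3^2)^2)) * w (n+1)"
    unfolding S_def by algebra
  also have "\<dots> = of_int (n-3) * (16*b*c) * w (n-3)
      - (8*a*(c-b) + of_int (n-2) * (16*a*(b+c))) * w (n-2)
      + (of_int (n-1) * (16*(a^2+b^2+c^2)) + -16*(b^2-c^2)) * w (n-1)
      - (8*a*(c-b) + of_int n * (16*a*(b+c))) * w n
      + of_int (n+1) * (16*b*c) * w (n+1)"
    by (simp only: K1 K2 K3 K4 K5)
  also have "\<dots> = -16 * E"
    unfolding E_def by (simp add: algebra_simps)
  finally have "D * S = 0" using E0 by simp
  then have "S = 0" using D0 by simp
  then show ?thesis
    unfolding Let_def v1_def[symmetric] v2_def[symmetric] v3_def[symmetric] w_def[symmetric]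
      G_def[symmetric] S_def[symmetric] .
qed

end
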